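(* Let $p,q\geq 2$ be relatively prime integers. Then $\mathrm{real}_{pq}(G_{p,q}(\mathrm{config}_{pq}(\xi)))=p\xi$ for all real $\xi\geq 0$.
   Context: For an integer $n>1$, $A_n=\{0,1,\dots,n-1\}$. For real $\xi\geq0$, let $\xi=\sum_{i\in\mathbb{Z}}\xi_i n^i$ be the unique base-$n$ expansion with $\xi_i\in A_n$ and $\xi_i\neq n-1$ for infinitely many $i<0$; define $\mathrm{config}_n(\xi)\in A_n^{\mathbb{Z}}$ by $\mathrm{config}_n(\xi)(i)=\xi_{-i}$. For $c\in A_n^{\mathbb{Z}}$ with $c(i)=0$ for all sufficiently small $i$, $\mathrm{real}_n(c)=\sum_{i\in\mathbb{Z}}c(-i)n^i$. Define $g_{p,q}:A_{pq}\times A_{pq}\to A_{pq}$ by writing $x=x_1q+x_0$, $y=y_1q+y_0$ with $x_0,y_0\in A_q$, $x_1,y_1\in A_p$ (uniquely), and setting $g_{p,q}(x,y)=x_0p+y_1$; and $G_{p,q}:A_{pq}^{\mathbb{Z}}\to A_{pq}^{\mathbb{Z}}$ by $G_{p,q}(c)(i)=g_{p,q}(c(i),c(i+1))$. *)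

theory Defs
  imports "HOL-Analysis.Analysis"
begin

text \<open>A base-n digit sequence d (d i is the coefficient of n^i) is THE base-n expansion
of xi: digits in A_n = {0..n-1}, d i \<noteq> n-1 for infinitely many negative i,
and xi = sum over all integers i of d i * n^i.\<close>
definition is_expansion :: "nat \<Rightarrow> real \<Rightarrow> (int \<Rightarrow> nat) \<Rightarrow> bool" where
  "is_expansion n \<xi> d \<longleftrightarrow>
     (\<forall>i. d i < n) \<and>
     infinite {i::int. i < 0 \<and> d i \<noteq> n - 1} \<and>
     ((\<lambda>i. real (d i) * real n powi i) has_sum \<xi>) UNIV"

definition config :: "nat \<Rightarrow> real \<Rightarrow> int \<Rightarrow> nat" where
  "config n \<xi> = (\<lambda>i. (THE d. is_expansion n \<xi> d) (- i))"

definition realn :: "nat \<Rightarrow> (int \<Rightarrow> nat) \<Rightarrow> real" where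
  "realn n c = (\<Sum>\<^sub>\<infinity>i\<in>(UNIV::int set). real (c (- i)) * real n powi i)"

text \<open>x = x1*q + x0 with x0 < q, so x0 = x mod q and x1 = x div q.\<close>
definition g :: "nat \<Rightarrow> nat \<Rightarrow> nat \<Rightarrow> nat \<Rightarrow> nat" where
  "g p q x y = (x mod q) * p + y div q"

definition G :: "nat \<Rightarrow> nat \<Rightarrow> (int \<Rightarrow> nat) \<Rightarrow> int \<Rightarrow> nat" where
  "G p q c = (\<lambda>i. g p q (c i) (c (i + 1)))"

end

theory Submission
  imports Defs
begin

lemma tele_int:
  fixes u v :: "int \<Rightarrow> real"
  assumes "a \<le> b" "\<And>i. a \<le> i \<Longrightarrow> i < b \<Longrightarrow> u i = v i - v (i+1)"
  shows "sum u {a..<b} = v a - v b"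
  using assms(1,2)
proof (induction b rule: int_ge_induct)
  case base
  then show ?case by simp
next
  case (step b)
  have e: "{a..<b+1} = insert b {a..<b}" using step.hyps by auto
  have "sum u {a..<b} = v a - v b"
    by (rule step.IH) (use step.prems in auto)
  moreover have "u b = v b - v (b+1)" using step by simp
  ultimately show ?case unfolding e by simp
qed

lemma geom_int:
  fixes N :: real
  assumes "a \<le> b" "N > 0"
  shows "(\<Sum>i\<in>{a..<b}. (N - 1) * N powi i) = N powi b - N powi a"
proof -
  have "(\<Sum>i\<in>{a..<b}. (N - 1) * N powi i) = (-(N powi a)) - (-(N powi b))"
    by (rule tele_int[OF assms(1)]) (use assms(2) in \<open>simp add: power_int_add_1 algebra_simps\<close>)
  then show ?thesis by simp
qed

lemma small_powi:
  fixes N :: real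
  assumes "N > 1" "\<epsilon> > 0"
  shows "\<exists>a<c. N powi a < \<epsilon>"
proof -
  obtain m where m: "(1/N)^m < \<epsilon>" using real_arch_pow_inv[OF assms(2), of "1/N"] assms by auto
  define a where "a = min (c-1) (- int m)"
  have "N powi a \<le> N powi (- int m)"
    by (rule power_int_increasing) (use assms in \<open>auto simp: a_def\<close>)
  also have "\<dots> = (1/N)^m" by (simp add: power_int_minus power_int_of_nat power_one_over inverse_eq_divide)
  finally show ?thesis using m by (intro exI[of _ a]) (auto simp: a_def)
qed

lemma fin_bounded_int:
  fixes F :: "int set"
  assumes "finite F"
  shows "\<exists>a b. F \<subseteq> {a..<b}"
proof -
  obtain a where "\<forall>x\<in>F. a \<le> x" using bdd_below_finite[OF assms] unfolding bdd_below_def by auto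
  moreover obtain b where "\<forall>x\<in>F. x \<le> b" using bdd_above_finite[OF assms] unfolding bdd_above_def by auto
  ultimately have "F \<subseteq> {a..<b+1}" by auto
  then show ?thesis by blast
qed

lemma tail_bound:
  fixes d :: "int \<Rightarrow> nat"
  assumes n2: "n \<ge> 2" and dlt: "\<And>i. d i < n"
    and hs: "((\<lambda>i. real (d i) * real n powi i) has_sum \<xi>) UNIV" and jk: "j < k"
  shows "infsum (\<lambda>i. real (d i) * real n powi i) {..<k}
          \<le> real n powi k - (real n - 1 - real (d j)) * real n powi j"
proof -
  let ?f = "\<lambda>i. real (d i) * real n powi i"
  let ?N = "real n"
  have Npos: "?N > 0" using n2 by simp
  have sm: "?f summable_on {..<k}"
    by (rule summable_on_subset_banach[of _ UNIV]) (use hs in \<open>auto simp: summable_on_def\<close>)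
  show ?thesis
  proof (rule infsum_le_finite_sums[OF sm])
    fix F assume F: "finite F" "F \<subseteq> {..<k}"
    obtain a0 b0 where ab: "F \<subseteq> {a0..<b0}" using fin_bounded_int[OF F(1)] by blast
    define a where "a = min a0 j"
    have Fa: "F \<subseteq> {a..<k}"
    proof
      fix x assume "x \<in> F"
      then have "a0 \<le> x" "x < k" using ab F(2) by auto
      then show "x \<in> {a..<k}" by (auto simp: a_def)
    qed
    have ak: "a \<le> k" "a \<le> j" using jk by (auto simp: a_def)
    have s1: "sum ?f F \<le> sum ?f {a..<k}"
      by (rule sum_mono2) (use Fa in auto)
    have s2: "sum ?f {a..<k} = (\<Sum>i\<in>{a..<k}. (?N - 1) * ?N powi i)
                 - (\<Sum>i\<in>{a..<k}. (?N - 1 - real (d i)) * ?N powi i)"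
      by (simp add: sum_subtractf[symmetric] algebra_simps)
    have s3: "(\<Sum>i\<in>{a..<k}. (?N - 1) * ?N powi i) = ?N powi k - ?N powi a"
      by (rule geom_int[OF ak(1) Npos])
    have s4: "(\<Sum>i\<in>{a..<k}. (?N - 1 - real (d i)) * ?N powi i) \<ge> (?N - 1 - real (d j)) * ?N powi j"
    proof -
      have "\<And>i. (?N - 1 - real (d i)) * ?N powi i \<ge> 0"
      proof -
        fix i
        have "d i + 1 \<le> n" using dlt[of i] by simp
        then have "real (d i) + 1 \<le> ?N" by linarith
        then show "(?N - 1 - real (d i)) * ?N powi i \<ge> 0" using Npos by simp
      qed
      then show ?thesis
        by (intro member_le_sum[where f="\<lambda>i. (?N - 1 - real (d i)) * ?N powi i"]) (use ak jk in auto)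
    qed
    have "?N powi a > 0" using Npos by simp
    then show "sum ?f F \<le> ?N powi k - (?N - 1 - real (d j)) * ?N powi j"
      using s1 s2 s3 s4 by linarith
  qed
qed

lemma head_zero:
  fixes d :: "int \<Rightarrow> nat"
  assumes n2: "n \<ge> 2"
    and hs: "((\<lambda>i. real (d i) * real n powi i) has_sum \<xi>) UNIV"
  shows "\<exists>M. \<forall>i\<ge>M. d i = 0"
proof -
  let ?f = "\<lambda>i. real (d i) * real n powi i"
  define S where "S = {i. 0 \<le> i \<and> d i \<noteq> 0}"
  have nn: "\<And>i. ?f i \<ge> 0" by simp
  have cardb: "real (card F) \<le> \<xi>" if "finite F" "F \<subseteq> S" for F
  proof -
    have "real (card F) = (\<Sum>i\<in>F. 1)" by simp
    also have "\<dots> \<le> sum ?f F"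
    proof (rule sum_mono)
      fix i assume "i \<in> F"
      then have i: "0 \<le> i" "d i \<ge> 1" using that by (auto simp: S_def)
      have "(1::real) \<le> real n powi i"
        using power_int_increasing[of 0 i "real n"] i n2 by simp
      moreover have "real (d i) \<ge> 1" using i by simp
      ultimately show "1 \<le> ?f i" using mult_mono[of 1 "real (d i)" 1 "real n powi i"] by simp
    qed
    also have "\<dots> \<le> \<xi>"
      by (rule finite_sum_le_has_sum[OF hs that(1)]) auto
    finally show ?thesis .
  qed
  have "finite S"
  proof (rule ccontr)
    assume "infinite S"
    then obtain F where F: "F \<subseteq> S" "finite F" "card F = Suc (nat \<lceil>\<xi>\<rceil>)"
      using infinite_arbitrarily_large by blast
    have "real (card F) \<le> \<xi>" using cardb F by blast
    moreover have "real (card F) > \<xi>" using F(3) by linarith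
    ultimately show False by simp
  qed
  then obtain b where b: "\<forall>x\<in>S. x \<le> b" using bdd_above_finite unfolding bdd_above_def by blast
  have "d i = 0" if "i \<ge> max b 0 + 1" for i
  proof (rule ccontr)
    assume "d i \<noteq> 0"
    then have "i \<in> S" using that by (auto simp: S_def)
    then show False using b that by fastforce
  qed
  then show ?thesis by blast
qed

lemma digit_eq:
  fixes d :: "int \<Rightarrow> nat"
  assumes n2: "n \<ge> 2" and ex: "is_expansion n \<xi> d"
  shows "d k = nat (\<lfloor>\<xi> / real n powi k\<rfloor> mod int n)"
proof -
  let ?f = "\<lambda>i. real (d i) * real n powi i"
  let ?N = "real n"
  have Npos: "?N > 0" using n2 by simp
  have dlt: "\<And>i. d i < n" and inf: "infinite {i::int. i < 0 \<and> d i \<noteq> n - 1}"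
    and hs: "(?f has_sum \<xi>) UNIV" using ex unfolding is_expansion_def by auto
  obtain M0 where M0: "\<forall>i\<ge>M0. d i = 0" using head_zero[OF n2 hs] by blast
  define M where "M = max M0 (k+1)"
  have M: "\<And>i. i \<ge> M \<Longrightarrow> d i = 0" "k < M" using M0 by (auto simp: M_def)
  obtain j where j: "j < k" "d j \<noteq> n - 1"
  proof -
    have "\<exists>j<k. d j \<noteq> n - 1"
    proof (rule ccontr)
      assume "\<not> ?thesis"
      then have "{i::int. i < 0 \<and> d i \<noteq> n - 1} \<subseteq> {k..<0}" by force
      then show False using inf finite_subset by blast
    qed
    then show ?thesis using that by blast
  qed
  have dj: "real (d j) + 2 \<le> ?N" using dlt[of j] j(2) by linarith
  define T where "T = infsum ?f {..<k}"
  have smT: "?f summable_on {..<k}"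
    by (rule summable_on_subset_banach[of _ UNIV]) (use hs in \<open>auto simp: summable_on_def\<close>)
  have T0: "T \<ge> 0" unfolding T_def by (rule infsum_nonneg) simp
  have T1: "T \<le> ?N powi k - (?N - 1 - real (d j)) * ?N powi j"
    unfolding T_def by (rule tail_bound[OF n2 dlt hs j(1)])
  have "(?N - 1 - real (d j)) * ?N powi j > 0" using dj Npos by simp
  with T1 have T2: "T < ?N powi k" by linarith
  define H where "H = sum ?f {k..<M}"
  have "(?f has_sum (T + H + 0)) ({..<k} \<union> {k..<M} \<union> {M..})"
  proof (intro has_sum_Un_disjoint)
    show "(?f has_sum T) {..<k}" unfolding T_def using smT by (rule has_sum_infsum)
    show "(?f has_sum H) {k..<M}" unfolding H_def by simp
    show "(?f has_sum 0) {M..}" using M(1) by (intro has_sum_0) auto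
  qed (use M(2) in auto)
  moreover have "{..<k} \<union> {k..<M} \<union> {M..} = UNIV" using M(2) by auto
  ultimately have "(?f has_sum (T + H)) UNIV" by simp
  then have xi: "\<xi> = T + H" using hs has_sum_unique by blast
  define K where "K = (\<Sum>i\<in>{k..<M}. d i * n ^ nat (i - k))"
  have HK: "H = ?N powi k * real K"
  proof -
    have "H = (\<Sum>i\<in>{k..<M}. ?N powi k * (real (d i) * ?N ^ nat (i - k)))"
      unfolding H_def
    proof (rule sum.cong)
      fix i assume "i \<in> {k..<M}"
      then have "i = k + int (nat (i - k))" by auto
      then have "?N powi i = ?N powi k * ?N ^ nat (i - k)"
        using Npos by (metis power_int_add power_int_of_nat less_irrefl)
      then show "?f i = ?N powi k * (real (d i) * ?N ^ nat (i - k))" by simp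
    qed simp
    also have "\<dots> = ?N powi k * real K"
      by (simp add: K_def sum_distrib_left)
    finally show ?thesis .
  qed
  have fl: "\<lfloor>\<xi> / ?N powi k\<rfloor> = int K"
  proof -
    have pk: "?N powi k > 0" using Npos by simp
    have "\<xi> / ?N powi k = real K + T / ?N powi k"
      using xi HK pk n2 by (simp add: add_divide_distrib)
    moreover have "0 \<le> T / ?N powi k" "T / ?N powi k < 1" using T0 T2 pk by auto
    ultimately show ?thesis by (simp add: floor_eq_iff)
  qed
  have "K mod n = d k"
  proof -
    have e: "{k..<M} = insert k {k+1..<M}" using M(2) by auto
    have "n dvd (\<Sum>i\<in>{k+1..<M}. d i * n ^ nat (i - k))"
    proof (rule dvd_sum)
      fix i assume "i \<in> {k+1..<M}"
      then have "nat (i - k) = Suc (nat (i - k - 1))" by auto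
      then show "n dvd d i * n ^ nat (i - k)" by simp
    qed
    then have "K mod n = d k mod n" unfolding K_def e by (simp add: mod_add_right_eq[symmetric])
    then show ?thesis using dlt[of k] by simp
  qed
  then show ?thesis unfolding fl by (metis nat_int of_nat_mod)
qed

lemma exists_exp:
  assumes n2: "n \<ge> 2" and xi0: "\<xi> \<ge> 0"
  shows "is_expansion n \<xi> (\<lambda>k. nat (\<lfloor>\<xi> / real n powi k\<rfloor> mod int n))"
proof -
  let ?N = "real n"
  define Fl where "Fl k = \<lfloor>\<xi> / ?N powi k\<rfloor>" for k
  define e where "e k = nat (Fl k mod int n)" for k
  let ?f = "\<lambda>i. real (e i) * ?N powi i"
  define v where "v k = real_of_int (Fl k) * ?N powi k" for k
  have Npos: "?N > 0" using n2 by simp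
  have step: "Fl (k+1) = Fl k div int n" for k
  proof -
    have "?N powi (k+1) = ?N powi k * ?N" using Npos by (simp add: power_int_add_1)
    then have "\<xi> / ?N powi (k+1) = (\<xi> / ?N powi k) / real_of_int (int n)"
      by (metis divide_divide_eq_left of_int_of_nat_eq)
    then have "Fl (k+1) = \<lfloor>(\<xi> / ?N powi k) / real_of_int (int n)\<rfloor>" unfolding Fl_def by (rule arg_cong[where f=floor])
    also have "\<dots> = Fl k div int n" unfolding Fl_def by (rule floor_divide_real_eq_div) simp
    finally show ?thesis .
  qed
  have tm: "?f k = v k - v (k+1)" for k
  proof -
    have "Fl k = int n * Fl (k+1) + Fl k mod int n" unfolding step by simp
    then have "real_of_int (Fl k mod int n) = real_of_int (Fl k) - ?N * real_of_int (Fl (k+1))"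
      by (metis add_diff_cancel_left' of_int_diff of_int_mult of_int_of_nat_eq)
    moreover have "real (e k) = real_of_int (Fl k mod int n)"
      unfolding e_def using n2 by simp
    moreover have "?N powi (k+1) = ?N powi k * ?N" using Npos by (simp add: power_int_add_1)
    ultimately show ?thesis unfolding v_def
      by (simp only:) (simp add: algebra_simps)
  qed
  have tele: "sum ?f {a..<b} = v a - v b" if "a \<le> b" for a b
    by (rule tele_int[OF that]) (rule tm)
  have vle: "v k \<le> \<xi>" for k
  proof -
    have "real_of_int (Fl k) \<le> \<xi> / ?N powi k" unfolding Fl_def by simp
    then show ?thesis unfolding v_def using Npos by (simp add: pos_le_divide_eq)
  qed
  have vgt: "v k > \<xi> - ?N powi k" for k
  proof -
    have "\<xi> / ?N powi k < real_of_int (Fl k) + 1" unfolding Fl_def by simp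
    then have "\<xi> < (real_of_int (Fl k) + 1) * ?N powi k" using Npos by (simp add: pos_divide_less_eq)
    then show ?thesis unfolding v_def by (simp add: algebra_simps)
  qed
  have vnn: "v k \<ge> 0" for k
    unfolding v_def Fl_def using xi0 Npos by simp
  obtain m where m: "\<xi> < ?N ^ m" using real_arch_pow[of ?N \<xi>] n2 by auto
  define b0 where "b0 = int m"
  have vb0: "v b0 = 0"
  proof -
    have "\<xi> / ?N powi b0 < 1" "0 \<le> \<xi> / ?N powi b0"
      using m Npos xi0 by (auto simp: b0_def power_int_of_nat)
    then have "Fl b0 = 0" unfolding Fl_def by (simp add: floor_eq_iff)
    then show ?thesis by (simp add: v_def)
  qed
  have finb: "sum ?f F \<le> \<xi>" if fF: "finite F" for F
  proof -
    obtain a b where ab: "F \<subseteq> {a..<b}" using fin_bounded_int[OF fF] by blast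
    define b' where "b' = max a b"
    have "sum ?f F \<le> sum ?f {a..<b'}"
      by (rule sum_mono2) (use ab in \<open>auto simp: b'_def\<close>)
    also have "\<dots> = v a - v b'" by (rule tele) (simp add: b'_def)
    also have "\<dots> \<le> \<xi>" using vle[of a] vnn[of b'] by simp
    finally show ?thesis .
  qed
  have sm: "?f summable_on UNIV"
    by (rule nonneg_bdd_above_summable_on) (use finb in \<open>auto simp: bdd_above_def\<close>)
  define S where "S = infsum ?f UNIV"
  have hsS: "(?f has_sum S) UNIV" unfolding S_def using sm by simp
  have "S \<le> \<xi>" by (rule has_sum_le_finite_sums[OF hsS]) (rule finb)
  moreover have "\<xi> \<le> S"
  proof (rule field_le_epsilon)
    fix \<epsilon> :: real assume "\<epsilon> > 0"
    then obtain a where a: "a < b0" "?N powi a < \<epsilon>" using small_powi[of ?N \<epsilon> b0] n2 by auto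
    have "sum ?f {a..<b0} \<le> S" by (rule finite_sum_le_has_sum[OF hsS]) auto
    moreover have "sum ?f {a..<b0} = v a" using tele[of a b0] a vb0 by simp
    ultimately show "\<xi> \<le> S + \<epsilon>" using vgt[of a] a by linarith
  qed
  ultimately have hs: "(?f has_sum \<xi>) UNIV" using hsS by simp
  have inf: "infinite {i::int. i < 0 \<and> e i \<noteq> n - 1}"
  proof
    assume fin: "finite {i::int. i < 0 \<and> e i \<noteq> n - 1}"
    obtain lo where lo: "\<forall>x\<in>{i::int. i < 0 \<and> e i \<noteq> n - 1}. lo \<le> x"
      using bdd_below_finite[OF fin] unfolding bdd_below_def by blast
    define k0 where "k0 = min lo 0"
    have all: "e i = n - 1" if "i < k0" for i
      using lo that by (force simp: k0_def)
    have pos: "v k0 + ?N powi k0 - \<xi> > 0" using vgt[of k0] by simp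
    obtain a where a: "a < k0" "?N powi a < v k0 + ?N powi k0 - \<xi>"
      using small_powi[OF _ pos, of ?N k0] n2 by auto
    have "sum ?f {a..<k0} = (\<Sum>i\<in>{a..<k0}. (?N - 1) * ?N powi i)"
      by (rule sum.cong) (use all n2 in \<open>auto simp: of_nat_diff\<close>)
    also have "\<dots> = ?N powi k0 - ?N powi a" using geom_int[of a k0 ?N] a Npos by simp
    finally have "v a - v k0 = ?N powi k0 - ?N powi a" using tele[of a k0] a by simp
    then have "v a > \<xi>" using a by linarith
    then show False using vle[of a] by simp
  qed
  have lt: "e i < n" for i
  proof -
    have "Fl i mod int n < int n" "0 \<le> Fl i mod int n" using n2 by auto
    then show ?thesis unfolding e_def by linarith
  qed
  have "is_expansion n \<xi> e"
    unfolding is_expansion_def using hs inf lt by blast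
  then show ?thesis unfolding e_def Fl_def .
qed

theorem lemma1:
  fixes p q :: nat and \<xi> :: real
  assumes "p \<ge> 2" and "q \<ge> 2" and "coprime p q" and "\<xi> \<ge> 0"
  shows "realn (p * q) (G p q (config (p * q) \<xi>)) = real p * \<xi>"
proof -
  define n where "n = p * q"
  let ?N = "real n"
  have n2: "n \<ge> 2" using assms(1,2) unfolding n_def
    using mult_le_mono[of 2 p 1 q] by simp
  have Npos: "?N > 0" using n2 by simp
  have "\<exists>!d. is_expansion n \<xi> d"
  proof (rule ex1I)
    show "is_expansion n \<xi> (\<lambda>k. nat (\<lfloor>\<xi> / real n powi k\<rfloor> mod int n))"
      by (rule exists_exp[OF n2 assms(4)])
  next
    fix d assume "is_expansion n \<xi> d"
    then show "d = (\<lambda>k. nat (\<lfloor>\<xi> / real n powi k\<rfloor> mod int n))"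
      using digit_eq[OF n2] by blast
  qed
  then have hD: "is_expansion n \<xi> (THE d. is_expansion n \<xi> d)" by (rule theI')
  define D where "D = (THE d. is_expansion n \<xi> d)"
  have hD': "is_expansion n \<xi> D" using hD unfolding D_def .
  have hs: "((\<lambda>i. real (D i) * ?N powi i) has_sum \<xi>) UNIV"
    using hD' unfolding is_expansion_def by blast
  have cfg: "config n \<xi> = (\<lambda>i. D (- i))" unfolding config_def D_def ..
  define a where "a i = real (D i mod q) * ?N powi i" for i
  define b where "b i = real (D i div q) * ?N powi i" for i
  have le_a: "a i \<le> real (D i) * ?N powi i" for i
    unfolding a_def using Npos by (intro mult_right_mono) auto
  have le_b: "b i \<le> real (D i) * ?N powi i" for i
    unfolding b_def using Npos by (intro mult_right_mono) (auto simp: div_le_dividend)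
  have bnd: "sum (\<lambda>i. real (D i) * ?N powi i) F \<le> \<xi>" if "finite F" for F
    by (rule finite_sum_le_has_sum[OF hs that]) auto
  have sa: "a summable_on UNIV"
  proof (rule nonneg_bdd_above_summable_on)
    show "bdd_above (sum a ` {F. F \<subseteq> UNIV \<and> finite F})"
    proof (rule bdd_aboveI)
      fix y assume "y \<in> sum a ` {F. F \<subseteq> UNIV \<and> finite F}"
      then obtain F where F: "finite F" "y = sum a F" by blast
      have "sum a F \<le> sum (\<lambda>i. real (D i) * ?N powi i) F" by (rule sum_mono) (rule le_a)
      then show "y \<le> \<xi>" using bnd[OF F(1)] F(2) by linarith
    qed
  qed (auto simp: a_def)
  have sb: "b summable_on UNIV"
  proof (rule nonneg_bdd_above_summable_on)
    show "bdd_above (sum b ` {F. F \<subseteq> UNIV \<and> finite F})"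
    proof (rule bdd_aboveI)
      fix y assume "y \<in> sum b ` {F. F \<subseteq> UNIV \<and> finite F}"
      then obtain F where F: "finite F" "y = sum b F" by blast
      have "sum b F \<le> sum (\<lambda>i. real (D i) * ?N powi i) F" by (rule sum_mono) (rule le_b)
      then show "y \<le> \<xi>" using bnd[OF F(1)] F(2) by linarith
    qed
  qed (auto simp: b_def)
  define SA where "SA = infsum a UNIV"
  define SB where "SB = infsum b UNIV"
  have ha: "(a has_sum SA) UNIV" unfolding SA_def using sa by simp
  have hb: "(b has_sum SB) UNIV" unfolding SB_def using sb by simp
  have "((\<lambda>i. a i + real q * b i) has_sum (SA + real q * SB)) UNIV"
    by (intro has_sum_add has_sum_cmult_right ha hb)
  moreover have "(\<lambda>i. a i + real q * b i) = (\<lambda>i. real (D i) * ?N powi i)"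
  proof
    fix i
    have "real (D i mod q) + real q * real (D i div q) = real (D i)"
      by (metis mod_mult_div_eq of_nat_add of_nat_mult)
    then show "a i + real q * b i = real (D i) * ?N powi i"
      unfolding a_def b_def by (simp only: mult.assoc[symmetric] distrib_right[symmetric])
  qed
  ultimately have sum1: "SA + real q * SB = \<xi>" using hs by (metis has_sum_unique)
  have "inj (\<lambda>i::int. i - 1)" by (simp add: inj_def)
  moreover have "range (\<lambda>i::int. i - 1) = UNIV"
    by (rule surjI[of _ "\<lambda>i. i + 1"]) simp
  ultimately have hb': "((\<lambda>i. b (i - 1)) has_sum SB) UNIV"
    using has_sum_reindex[of "\<lambda>i::int. i - 1" UNIV b SB] hb by (simp add: comp_def)
  have "((\<lambda>i. real p * a i + ?N * b (i - 1)) has_sum (real p * SA + ?N * SB)) UNIV"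
    by (intro has_sum_add has_sum_cmult_right ha hb')
  moreover have "(\<lambda>i. real (G p q (config n \<xi>) (- i)) * ?N powi i) = (\<lambda>i. real p * a i + ?N * b (i - 1))"
  proof
    fix i :: int
    have gi: "G p q (config n \<xi>) (- i) = D i mod q * p + D (i - 1) div q"
      unfolding G_def g_def cfg by simp
    have pw: "?N powi i = ?N * ?N powi (i - 1)"
      using Npos power_int_add_1'[of ?N "i - 1"] by simp
    show "real (G p q (config n \<xi>) (- i)) * ?N powi i = real p * a i + ?N * b (i - 1)"
      unfolding gi a_def b_def pw by (simp add: algebra_simps)
  qed
  ultimately have "((\<lambda>i. real (G p q (config n \<xi>) (- i)) * ?N powi i) has_sum (real p * SA + ?N * SB)) UNIV"
    by simp
  then have "realn n (G p q (config n \<xi>)) = real p * SA + ?N * SB"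
    unfolding realn_def by (rule infsumI)
  also have "\<dots> = real p * (SA + real q * SB)" by (simp add: n_def algebra_simps)
  also have "\<dots> = real p * \<xi>" using sum1 by simp
  finally show ?thesis unfolding n_def .
qed

end
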